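(* If $R^*$ denotes the Reeb vector field of $M^*$, then $R^*\circ R=-\mathrm{id}_M$. In particular, $(M^* )^*=-M$.
   Context: Let $(W,\omega)$ be a symplectic vector space and let $M\subset W$ be a smooth hypersurface bounding a quadratically convex domain that contains the origin in its interior. For every $x\in M$ let $R(x)\in W$ be the unique vector with $\omega(v,R(x))=0$ for all $v\in T_xM$ and $\omega(x,R(x))=1$; that is, $R$ is the Reeb vector field of the contact form $\omega(x,\cdot)|_{T_xM}$ on $M$. The image $M^*=\{R(x): x\in M\}\subset W$ is the symplectic polar of $M$. $R^*$ denotes the analogous map for $M^*$: for $a\in M^*$, $R^*(a)$ is the unique vector with $\omega(u,R^*(a))=0$ for all $u\in T_aM^*$ and $\omega(a,R^*(a))=1$. *)

theory Defs
  imports "HOL-Analysis.Analysis"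
begin

definition symplectic_form :: "('a::euclidean_space \<Rightarrow> 'a \<Rightarrow> real) \<Rightarrow> bool" where
  "symplectic_form \<omega> \<longleftrightarrow> bilinear \<omega> \<and> (\<forall>u v. \<omega> u v = - \<omega> v u)
     \<and> (\<forall>u. (\<forall>v. \<omega> u v = 0) \<longrightarrow> u = 0)"

text \<open>Smooth (C-infinity) real function: D [] = f and every iterated directional
  derivative D vs is Frechet differentiable everywhere, with derivative
  v \<mapsto> D (v # vs).\<close>
definition smooth_derivs :: "('a::euclidean_space \<Rightarrow> real) \<Rightarrow> ('a list \<Rightarrow> 'a \<Rightarrow> real) \<Rightarrow> bool" where
  "smooth_derivs f D \<longleftrightarrow> D [] = f \<and>
     (\<forall>vs x. (D vs has_derivative (\<lambda>v. D (v # vs) x)) (at x))"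

text \<open>M is a smooth hypersurface bounding a quadratically convex domain containing the
  origin in its interior: M is the regular zero set of a smooth defining function rho,
  the domain is {rho \<le> 0} (bounded and convex, with 0 in its interior), and the
  Hessian of rho is positive definite on each tangent hyperplane ker d rho(x)
  (positive definite second fundamental form).\<close>
definition qconvex_hypersurface :: "'a::euclidean_space set \<Rightarrow> bool" where
  "qconvex_hypersurface M \<longleftrightarrow> (\<exists>\<rho> D. smooth_derivs \<rho> D \<and>
     M = {x. \<rho> x = 0} \<and>
     (\<forall>x\<in>M. \<exists>v. D [v] x \<noteq> 0) \<and>
     (\<forall>x\<in>M. \<forall>v. v \<noteq> 0 \<and> D [v] x = 0 \<longrightarrow> D [v, v] x > 0) \<and>
     bounded {x. \<rho> x \<le> 0} \<and> convex {x. \<rho> x \<le> 0} \<and>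
     0 \<in> interior {x. \<rho> x \<le> 0})"

definition tangent_space :: "'a::euclidean_space set \<Rightarrow> 'a \<Rightarrow> 'a set" where
  "tangent_space S x = {v. \<exists>\<gamma>. \<gamma> 0 = x \<and> (\<forall>\<^sub>F t in nhds 0. \<gamma> t \<in> S)
      \<and> (\<gamma> has_vector_derivative v) (at 0)}"

text \<open>Reeb vector of the contact form omega(x,.) restricted to T_x S.\<close>
definition reeb :: "('a::euclidean_space \<Rightarrow> 'a \<Rightarrow> real) \<Rightarrow> 'a set \<Rightarrow> 'a \<Rightarrow> 'a" where
  "reeb \<omega> S x = (THE r. (\<forall>v\<in>tangent_space S x. \<omega> v r = 0) \<and> \<omega> x r = 1)"

definition symplectic_polar :: "('a::euclidean_space \<Rightarrow> 'a \<Rightarrow> real) \<Rightarrow> 'a set \<Rightarrow> 'a set" where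
  "symplectic_polar \<omega> S = reeb \<omega> S ` S"

end

theory Submission
  imports Defs
begin


locale sset =
  fixes \<omega> :: "'a::euclidean_space \<Rightarrow> 'a \<Rightarrow> real" and \<rho> :: "'a \<Rightarrow> real"
    and D :: "'a list \<Rightarrow> 'a \<Rightarrow> real" and M :: "'a set"
  assumes symp: "symplectic_form \<omega>"
    and sm: "smooth_derivs \<rho> D"
    and Meq: "M = {x. \<rho> x = 0}"
    and reg: "\<forall>x\<in>M. \<exists>v. D [v] x \<noteq> 0"
    and qc: "\<forall>x\<in>M. \<forall>v. v \<noteq> 0 \<and> D [v] x = 0 \<longrightarrow> D [v, v] x > 0"
    and cvx: "convex {x. \<rho> x \<le> 0}"
    and int0: "0 \<in> interior {x. \<rho> x \<le> 0}"
begin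

lemma bil: "bilinear \<omega>" using symp unfolding symplectic_form_def by blast
lemma asym: "\<omega> u v = - \<omega> v u" using symp unfolding symplectic_form_def by blast
lemma nondeg: "(\<And>v. \<omega> u v = 0) \<Longrightarrow> u = 0" using symp unfolding symplectic_form_def by blast
lemma nondeg2: "(\<And>v. \<omega> v r = 0) \<Longrightarrow> r = 0"
  by (rule nondeg) (metis asym neg_equal_0_iff_equal)

lemma lin_r: "linear (\<omega> u)" using bil unfolding bilinear_def by blast
lemma lin_l: "linear (\<lambda>u. \<omega> u v)" using bil unfolding bilinear_def by blast

lemma expand_l: "\<omega> v w = (\<Sum>b\<in>Basis. (v \<bullet> b) * \<omega> b w)"
proof -
  have "\<omega> v w = \<omega> (\<Sum>b\<in>Basis. (v \<bullet> b) *\<^sub>R b) w" by (simp add: euclidean_representation)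
  also have "\<dots> = (\<Sum>b\<in>Basis. (v \<bullet> b) * \<omega> b w)"
    using linear_sum[OF lin_l[of w], of "\<lambda>b. (v \<bullet> b) *\<^sub>R b" Basis] linear_scale[OF lin_l[of w]] by simp
  finally show ?thesis .
qed

lemma expand_r: "\<omega> v w = (\<Sum>b\<in>Basis. (w \<bullet> b) * \<omega> v b)"
proof -
  have "\<omega> v w = \<omega> v (\<Sum>b\<in>Basis. (w \<bullet> b) *\<^sub>R b)" by (simp add: euclidean_representation)
  also have "\<dots> = (\<Sum>b\<in>Basis. (w \<bullet> b) * \<omega> v b)"
    using linear_sum[OF lin_r[of v], of "\<lambda>b. (w \<bullet> b) *\<^sub>R b" Basis] linear_scale[OF lin_r[of v]] by simp
  finally show ?thesis .
qed

definition Phi :: "'a \<Rightarrow> 'a" where "Phi r = (\<Sum>b\<in>Basis. \<omega> b r *\<^sub>R b)"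

lemma Phi_linear: "linear Phi"
proof (rule linearI)
  fix r s :: 'a and c :: real
  show "Phi (r + s) = Phi r + Phi s"
    unfolding Phi_def by (simp add: bilinear_radd[OF bil] scaleR_add_left sum.distrib)
  show "Phi (c *\<^sub>R r) = c *\<^sub>R Phi r"
    unfolding Phi_def by (simp add: bilinear_rmul[OF bil] scaleR_sum_right)
qed

lemma Phi_inner: "b \<in> Basis \<Longrightarrow> Phi r \<bullet> b = \<omega> b r"
  unfolding Phi_def by (simp add: inner_sum_left_Basis)

lemma Phi_inj: "inj Phi"
proof (rule injI)
  fix r s assume eq: "Phi r = Phi s"
  have "\<omega> b r = \<omega> b s" if "b \<in> Basis" for b
    using eq Phi_inner[OF that] by metis
  then have "\<omega> v r = \<omega> v s" for v
    by (subst expand_l, subst (2) expand_l) simp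
  then have "\<omega> v (r - s) = 0" for v by (simp add: bilinear_rsub[OF bil])
  then have "r - s = 0" by (rule nondeg2)
  then show "r = s" by simp
qed

lemma Psi_ex: "\<exists>Psi. linear Psi \<and> (\<forall>g v. \<omega> v (Psi g) = v \<bullet> g)"
proof -
  obtain Psi where Psi: "linear Psi" "Psi \<circ> Phi = id"
    using linear_injective_left_inverse[OF Phi_linear Phi_inj] by blast
  have surj: "surj Phi" by (rule linear_inj_imp_surj[OF Phi_linear Phi_inj])
  have PP: "Phi (Psi g) = g" for g
  proof -
    obtain r where "g = Phi r" using surj by blast
    then show ?thesis using Psi(2) by (metis comp_apply id_apply)
  qed
  have "\<omega> v (Psi g) = v \<bullet> g" for g v
  proof -
    have "\<omega> v (Psi g) = (\<Sum>b\<in>Basis. (v \<bullet> b) * \<omega> b (Psi g))" by (rule expand_l)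
    also have "\<dots> = (\<Sum>b\<in>Basis. (v \<bullet> b) * (g \<bullet> b))"
      by (rule sum.cong) (auto simp: Phi_inner[symmetric] PP)
    also have "\<dots> = v \<bullet> g" by (metis euclidean_inner)
    finally show ?thesis .
  qed
  then show ?thesis using Psi(1) by blast
qed

definition Psi where "Psi = (SOME Psi. linear Psi \<and> (\<forall>g v. \<omega> v (Psi g) = v \<bullet> g))"
lemma Psi: "linear Psi" "\<omega> v (Psi g) = v \<bullet> g"
  using someI_ex[OF Psi_ex] unfolding Psi_def[symmetric] by blast+

lemma D0: "D [] = \<rho>" using sm unfolding smooth_derivs_def by blast
lemma Dd: "(D vs has_derivative (\<lambda>v. D (v # vs) x)) (at x)"
  using sm unfolding smooth_derivs_def by blast
lemma rho_d: "(\<rho> has_derivative (\<lambda>v. D [v] x)) (at x)"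
  using Dd[of "[]" x] D0 by simp
lemma linD: "linear (\<lambda>v. D [v] x)"
  using has_derivative_linear[OF rho_d] .
lemma rho_cont: "continuous_on S \<rho>"
  by (meson continuous_at_imp_continuous_on has_derivative_continuous rho_d)

lemma D_expand: "D [v] y = (\<Sum>b\<in>Basis. (v \<bullet> b) * D [b] y)"
proof -
  have "D [v] y = D [(\<Sum>b\<in>Basis. (v \<bullet> b) *\<^sub>R b)] y" by (simp add: euclidean_representation)
  also have "\<dots> = (\<Sum>b\<in>Basis. (v \<bullet> b) * D [b] y)"
    using linear_sum[OF linD[of y], of "\<lambda>b. (v \<bullet> b) *\<^sub>R b" Basis] linear_scale[OF linD[of y]] by simp
  finally show ?thesis .
qed

lemma D2_expand: "D [h, v] x = (\<Sum>b\<in>Basis. (v \<bullet> b) * D [h, b] x)"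
proof -
  have e: "D [v] = (\<lambda>y. \<Sum>b\<in>Basis. (v \<bullet> b) * D [b] y)"
    using D_expand by (rule ext)
  have "(D [v] has_derivative (\<lambda>h. \<Sum>b\<in>Basis. (v \<bullet> b) * D [h, b] x)) (at x)"
    unfolding e by (intro has_derivative_sum has_derivative_mult_right Dd)
  from has_derivative_unique[OF Dd this] show ?thesis by metis
qed

end


context sset begin

lemma Dlin_scale: "D [c *\<^sub>R v] y = c * D [v] y" using linear_scale[OF linD] by simp
lemma Dlin_diff: "D [v - w] y = D [v] y - D [w] y" using linear_diff[OF linD] by simp
lemma Dlin_add: "D [v + w] y = D [v] y + D [w] y" using linear_add[OF linD] by simp

lemma line_deriv: "((\<lambda>\<tau>. \<rho> (y + \<tau> *\<^sub>R d)) has_real_derivative D [d] y) (at 0)"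
proof -
  have l: "((\<lambda>\<tau>. y + \<tau> *\<^sub>R d) has_derivative (\<lambda>\<tau>. \<tau> *\<^sub>R d)) (at 0)"
    by (auto intro!: derivative_eq_intros)
  have "((\<lambda>\<tau>. \<rho> (y + \<tau> *\<^sub>R d)) has_derivative (\<lambda>\<tau>. D [\<tau> *\<^sub>R d] y)) (at 0)"
    using has_derivative_compose[OF l, of \<rho>] rho_d[of y] by simp
  moreover have "(\<lambda>\<tau>. D [\<tau> *\<^sub>R d] y) = (*) (D [d] y)" by (rule ext) (simp add: Dlin_scale)
  ultimately show ?thesis unfolding has_field_derivative_def by simp
qed

lemma sup_ineq:
  assumes y: "y \<in> M" and z: "\<rho> z \<le> 0"
  shows "D [z] y \<le> D [y] y"
proof (rule ccontr)
  assume "\<not> ?thesis"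
  then have pos: "D [z - y] y > 0" by (simp add: Dlin_diff)
  obtain d0 where d0: "d0 > 0" "\<forall>h>0. h < d0 \<longrightarrow> \<rho> (y + 0 *\<^sub>R (z - y)) < \<rho> (y + (0 + h) *\<^sub>R (z - y))"
    using DERIV_pos_inc_right[OF line_deriv pos] by blast
  define h where "h = min (d0/2) 1"
  have h: "h > 0" "h < d0" "h \<le> 1" using d0 by (auto simp: h_def)
  have "\<rho> y = 0" using y Meq by simp
  then have lt: "0 < \<rho> (y + h *\<^sub>R (z - y))" using d0 h by auto
  have "(1 - h) *\<^sub>R y + h *\<^sub>R z \<in> {x. \<rho> x \<le> 0}"
    by (rule convexD[OF cvx]) (use h z y Meq in auto)
  moreover have "(1 - h) *\<^sub>R y + h *\<^sub>R z = y + h *\<^sub>R (z - y)" by (simp add: algebra_simps)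
  ultimately show False using lt by simp
qed

lemma pos: assumes y: "y \<in> M" shows "D [y] y > 0"
proof -
  obtain e where e: "e > 0" "ball 0 e \<subseteq> {x. \<rho> x \<le> 0}" using int0 mem_interior by blast
  obtain v where v: "D [v] y \<noteq> 0" using reg y by blast
  have "v \<noteq> 0" using v linear_0[OF linD] by auto
  then have nv: "norm v > 0" by simp
  define z where "z = (e / (2 * norm v) * sgn (D [v] y)) *\<^sub>R v"
  have "norm z = e / 2" using nv e v unfolding z_def by (simp add: abs_mult)
  then have "z \<in> ball 0 e" using e by simp
  then have "\<rho> z \<le> 0" using e by auto
  moreover have "D [z] y = e / (2 * norm v) * \<bar>D [v] y\<bar>"
    unfolding z_def Dlin_scale by (simp add: abs_sgn)
  moreover have "e / (2 * norm v) * \<bar>D [v] y\<bar> > 0" using e nv v by simp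
  ultimately show ?thesis using sup_ineq[OF y] by fastforce
qed

lemma ray: assumes y: "y \<in> M" and mu: "\<mu> > 0" and my: "\<mu> *\<^sub>R y \<in> M" shows "\<mu> = 1"
proof (rule ccontr)
  assume ne: "\<mu> \<noteq> 1"
  show False
  proof (cases "\<mu> > 1")
    case True
    have "\<rho> (\<mu> *\<^sub>R y) \<le> 0" using my Meq by simp
    from sup_ineq[OF y this] have "\<mu> * D [y] y \<le> D [y] y" by (simp add: Dlin_scale)
    then show False using pos[OF y] True
      by (metis mult_le_cancel_right2 not_less)
  next
    case False
    then have m1: "\<mu> < 1" using ne by simp
    have "\<rho> y \<le> 0" using y Meq by simp
    from sup_ineq[OF my this] have "D [y] (\<mu> *\<^sub>R y) \<le> \<mu> * D [y] (\<mu> *\<^sub>R y)" by (simp add: Dlin_scale)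
    then have "D [y] (\<mu> *\<^sub>R y) \<le> 0" using m1
      by (metis less_eq_real_def mult_le_cancel_right1 not_less)
    then have "\<mu> * D [y] (\<mu> *\<^sub>R y) \<le> 0" using mu by (simp add: mult_nonneg_nonpos)
    then show False using pos[OF my] by (simp add: Dlin_scale)
  qed
qed

lemma tan_sub: assumes x: "x \<in> M" and v: "v \<in> tangent_space M x" shows "D [v] x = 0"
proof -
  obtain \<gamma> where g: "\<gamma> 0 = x" "\<forall>\<^sub>F t in nhds 0. \<gamma> t \<in> M" "(\<gamma> has_vector_derivative v) (at 0)"
    using v unfolding tangent_space_def by blast
  have gd: "(\<gamma> has_derivative (\<lambda>t. t *\<^sub>R v)) (at 0)" using g(3) has_vector_derivative_def by blast
  have "((\<lambda>t. \<rho> (\<gamma> t)) has_derivative (\<lambda>t. D [t *\<^sub>R v] x)) (at 0)"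
    using has_derivative_compose[OF gd, of \<rho>] rho_d[of x] g(1) by simp
  moreover have "(\<lambda>t. D [t *\<^sub>R v] x) = (*) (D [v] x)" by (rule ext) (simp add: Dlin_scale)
  ultimately have d1: "((\<lambda>t. \<rho> (\<gamma> t)) has_real_derivative D [v] x) (at 0)"
    unfolding has_field_derivative_def by simp
  have ev: "\<forall>\<^sub>F t in nhds 0. \<rho> (\<gamma> t) = 0" using g(2) by eventually_elim (simp add: Meq)
  have "((\<lambda>t. 0) has_real_derivative D [v] x) (at 0)"
    using DERIV_cong_ev[OF refl ev refl] d1 by simp
  then show ?thesis using DERIV_const DERIV_unique by blast
qed

end



lemma frechet_est:
  fixes f :: "'a::real_normed_vector \<Rightarrow> 'b::real_normed_vector"
  assumes fd: "(f has_derivative f') (at x)" and eta: "\<eta> > 0"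
  shows "\<exists>d>0. \<forall>y. norm (y - x) < d \<longrightarrow> norm (f y - f x - f' (y - x)) \<le> \<eta> * norm (y - x)"
proof -
  have bl: "bounded_linear f'" and lim: "((\<lambda>y. norm (f y - f x - f' (y - x)) / norm (y - x)) \<longlongrightarrow> 0) (at x)"
    using fd unfolding has_derivative_iff_norm by auto
  obtain s where s: "s > 0" "\<forall>y. y \<noteq> x \<and> norm (y - x) < s \<longrightarrow>
      norm (norm (f y - f x - f' (y - x)) / norm (y - x) - 0) < \<eta>"
    using lim eta unfolding LIM_eq by blast
  have "norm (f y - f x - f' (y - x)) \<le> \<eta> * norm (y - x)" if "norm (y - x) < s" for y
  proof (cases "y = x")
    case True
    then show ?thesis using linear_0[OF bounded_linear.linear[OF bl]] by simp
  next
    case False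
    then have "norm (f y - f x - f' (y - x)) / norm (y - x) < \<eta>" using s that by auto
    then show ?thesis using False by (simp add: divide_less_eq less_imp_le)
  qed
  then show ?thesis using s by blast
qed

context sset begin

lemma tan_sup:
  assumes x: "x \<in> M" and w: "D [w] x = 0"
  shows "w \<in> tangent_space M x"
proof -
  define L0 where "L0 = D [x] x"
  have L0: "L0 > 0" using pos[OF x] L0_def by simp
  have rx: "\<rho> x = 0" using x Meq by simp
  define c where "c t = x + t *\<^sub>R w" for t :: real
  have step1: "\<exists>\<delta>>0. \<delta> \<le> 1 \<and> (\<forall>t. \<bar>t\<bar> < \<delta> \<longrightarrow> \<rho> ((1 - \<epsilon> * \<bar>t\<bar>) *\<^sub>R c t) \<le> 0 \<and> 0 \<le> \<rho> ((1 + \<epsilon> * \<bar>t\<bar>) *\<^sub>R c t))"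
    if e: "0 < \<epsilon>" "\<epsilon> \<le> 1/2" for \<epsilon>
  proof -
    define C where "C = \<epsilon> * norm x + 2 * norm w + 1"
    have C: "C > 0" using e unfolding C_def by (simp add: add_nonneg_pos)
    define \<eta> where "\<eta> = \<epsilon> * L0 / C"
    have eta: "\<eta> > 0" using e L0 C unfolding \<eta>_def by simp
    obtain d where d: "d > 0" "\<forall>y. norm (y - x) < d \<longrightarrow> norm (\<rho> y - \<rho> x - D [y - x] x) \<le> \<eta> * norm (y - x)"
      using frechet_est[OF rho_d eta] by blast
    define \<delta> where "\<delta> = min (d / C) 1"
    have dl: "\<delta> > 0" "\<delta> \<le> 1" using d C unfolding \<delta>_def by auto
    have gen: "\<bar>\<rho> ((1 + \<sigma> * \<bar>t\<bar>) *\<^sub>R c t) - \<sigma> * \<bar>t\<bar> * L0\<bar> \<le> \<epsilon> * L0 * \<bar>t\<bar>"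
      if t: "\<bar>t\<bar> < \<delta>" and sg: "\<bar>\<sigma>\<bar> \<le> \<epsilon>" for t \<sigma>
    proof -
      define s where "s = \<sigma> * \<bar>t\<bar>"
      define y where "y = (1 + s) *\<^sub>R c t"
      have s: "\<bar>s\<bar> \<le> \<epsilon> * \<bar>t\<bar>" unfolding s_def using sg by (simp add: abs_mult mult_right_mono)
      have t1: "\<bar>t\<bar> \<le> 1" using t dl by simp
      have "\<epsilon> * \<bar>t\<bar> \<le> 1" by (rule mult_le_one) (use e t1 in auto)
      then have s1: "\<bar>s\<bar> \<le> 1" using s by linarith
      have yx: "y - x = s *\<^sub>R x + ((1 + s) * t) *\<^sub>R w"
        unfolding y_def c_def by (simp add: algebra_simps)
      have Dyx: "D [y - x] x = s * L0"
        unfolding yx Dlin_add Dlin_scale w L0_def by simp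
      have "norm (y - x) \<le> \<bar>s\<bar> * norm x + \<bar>(1 + s) * t\<bar> * norm w"
        unfolding yx by (metis norm_scaleR norm_triangle_ineq)
      also have "\<dots> \<le> (\<epsilon> * \<bar>t\<bar>) * norm x + (2 * \<bar>t\<bar>) * norm w"
      proof (intro add_mono mult_right_mono)
        show "\<bar>(1 + s) * t\<bar> \<le> 2 * \<bar>t\<bar>" using s1 by (simp add: abs_mult mult_right_mono)
      qed (use s in auto)
      also have "\<dots> \<le> \<bar>t\<bar> * C" unfolding C_def by (simp add: algebra_simps)
      finally have ny: "norm (y - x) \<le> \<bar>t\<bar> * C" .
      have "\<bar>t\<bar> * C < d"
      proof -
        have "\<bar>t\<bar> * C < \<delta> * C" using t C by simp
        also have "\<dots> \<le> d" using C unfolding \<delta>_def by (simp add: min_def field_simps)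
        finally show ?thesis .
      qed
      then have "norm (\<rho> y - \<rho> x - D [y - x] x) \<le> \<eta> * norm (y - x)" using d ny by simp
      then have "\<bar>\<rho> y - s * L0\<bar> \<le> \<eta> * norm (y - x)" using rx Dyx by simp
      also have "\<dots> \<le> \<eta> * (\<bar>t\<bar> * C)" using ny eta by simp
      also have "\<dots> = \<epsilon> * L0 * \<bar>t\<bar>" unfolding \<eta>_def using C by simp
      finally show ?thesis unfolding y_def s_def .
    qed
    have "\<rho> ((1 - \<epsilon> * \<bar>t\<bar>) *\<^sub>R c t) \<le> 0 \<and> 0 \<le> \<rho> ((1 + \<epsilon> * \<bar>t\<bar>) *\<^sub>R c t)" if t: "\<bar>t\<bar> < \<delta>" for t
    proof
      have "\<bar>\<rho> ((1 + (-\<epsilon>) * \<bar>t\<bar>) *\<^sub>R c t) - (-\<epsilon>) * \<bar>t\<bar> * L0\<bar> \<le> \<epsilon> * L0 * \<bar>t\<bar>"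
        using gen[OF t, of "-\<epsilon>"] e by simp
      then show "\<rho> ((1 - \<epsilon> * \<bar>t\<bar>) *\<^sub>R c t) \<le> 0" by (simp add: algebra_simps)
      have "\<bar>\<rho> ((1 + \<epsilon> * \<bar>t\<bar>) *\<^sub>R c t) - \<epsilon> * \<bar>t\<bar> * L0\<bar> \<le> \<epsilon> * L0 * \<bar>t\<bar>"
        using gen[OF t, of "\<epsilon>"] e by simp
      then show "0 \<le> \<rho> ((1 + \<epsilon> * \<bar>t\<bar>) *\<^sub>R c t)" by (simp add: algebra_simps)
    qed
    then show ?thesis using dl by blast
  qed
  define sf where "sf t = (THE s. s > -1 \<and> \<rho> ((1 + s) *\<^sub>R c t) = 0)" for t
  have sf_eq: "sf t = s" if s: "s > -1" "\<rho> ((1 + s) *\<^sub>R c t) = 0" for s t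
    unfolding sf_def
  proof (rule the_equality)
    show "s > -1 \<and> \<rho> ((1 + s) *\<^sub>R c t) = 0" using s by simp
    fix s' assume s': "s' > -1 \<and> \<rho> ((1 + s') *\<^sub>R c t) = 0"
    have y: "(1 + s) *\<^sub>R c t \<in> M" using s Meq by simp
    have "((1 + s') / (1 + s)) *\<^sub>R ((1 + s) *\<^sub>R c t) = (1 + s') *\<^sub>R c t" using s by simp
    then have "((1 + s') / (1 + s)) *\<^sub>R ((1 + s) *\<^sub>R c t) \<in> M" using s s' Meq by simp
    from ray[OF y _ this] have "(1 + s') / (1 + s) = 1" using s s' by simp
    then show "s' = s" using s by (simp add: field_simps)
  qed
  have step3: "\<exists>\<delta>>0. \<forall>t. \<bar>t\<bar> < \<delta> \<longrightarrow> \<bar>sf t\<bar> \<le> \<epsilon> * \<bar>t\<bar> \<and> \<rho> ((1 + sf t) *\<^sub>R c t) = 0"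
    if e: "0 < \<epsilon>" "\<epsilon> \<le> 1/2" for \<epsilon>
  proof -
    obtain \<delta> where dl: "\<delta> > 0" "\<delta> \<le> 1" "\<forall>t. \<bar>t\<bar> < \<delta> \<longrightarrow> \<rho> ((1 - \<epsilon> * \<bar>t\<bar>) *\<^sub>R c t) \<le> 0 \<and> 0 \<le> \<rho> ((1 + \<epsilon> * \<bar>t\<bar>) *\<^sub>R c t)"
      using step1[OF e] by blast
    have "\<bar>sf t\<bar> \<le> \<epsilon> * \<bar>t\<bar> \<and> \<rho> ((1 + sf t) *\<^sub>R c t) = 0" if t: "\<bar>t\<bar> < \<delta>" for t
    proof -
      let ?f = "\<lambda>s. \<rho> ((1 + s) *\<^sub>R c t)"
      have cont: "continuous_on {-(\<epsilon> * \<bar>t\<bar>)..\<epsilon> * \<bar>t\<bar>} ?f"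
        by (intro continuous_on_compose2[OF rho_cont[of UNIV]] continuous_intros) auto
      have "?f (-(\<epsilon> * \<bar>t\<bar>)) \<le> 0" "0 \<le> ?f (\<epsilon> * \<bar>t\<bar>)" using dl t by auto
      moreover have "-(\<epsilon> * \<bar>t\<bar>) \<le> \<epsilon> * \<bar>t\<bar>" using e by simp
      ultimately obtain s where s: "-(\<epsilon> * \<bar>t\<bar>) \<le> s" "s \<le> \<epsilon> * \<bar>t\<bar>" "?f s = 0"
        using IVT'[of ?f "-(\<epsilon> * \<bar>t\<bar>)" 0 "\<epsilon> * \<bar>t\<bar>", OF _ _ _ cont] by auto
      have "\<epsilon> * \<bar>t\<bar> \<le> 1/2 * 1" by (rule mult_mono) (use e t dl in auto)
      then have "\<epsilon> * \<bar>t\<bar> < 1" by simp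
      then have "s > -1" using s by simp
      then have "sf t = s" using sf_eq s by blast
      then show ?thesis using s by auto
    qed
    then show ?thesis using dl by blast
  qed
  define \<gamma> where "\<gamma> t = (1 + sf t) *\<^sub>R c t" for t
  have sf0: "sf 0 = 0" using sf_eq[of 0 0] rx unfolding c_def by simp
  have g0: "\<gamma> 0 = x" unfolding \<gamma>_def sf0 c_def by simp
  have ev: "\<forall>\<^sub>F t in nhds 0. \<gamma> t \<in> M"
  proof -
    obtain \<delta> where "\<delta> > 0" "\<forall>t. \<bar>t\<bar> < \<delta> \<longrightarrow> \<bar>sf t\<bar> \<le> 1/2 * \<bar>t\<bar> \<and> \<rho> ((1 + sf t) *\<^sub>R c t) = 0"
      using step3[of "1/2"] by auto
    then show ?thesis unfolding eventually_nhds_metric \<gamma>_def dist_real_def using Meq by auto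
  qed
  have sfd: "(sf has_real_derivative 0) (at 0)"
    unfolding has_field_derivative_iff LIM_eq
  proof (intro allI impI)
    fix r :: real assume r: "r > 0"
    define \<epsilon> where "\<epsilon> = min (r/2) (1/2)"
    have e: "0 < \<epsilon>" "\<epsilon> \<le> 1/2" "\<epsilon> < r" using r unfolding \<epsilon>_def by auto
    obtain \<delta> where dl: "\<delta> > 0" "\<forall>t. \<bar>t\<bar> < \<delta> \<longrightarrow> \<bar>sf t\<bar> \<le> \<epsilon> * \<bar>t\<bar> \<and> \<rho> ((1 + sf t) *\<^sub>R c t) = 0"
      using step3[OF e(1,2)] by blast
    have "norm ((sf t - sf 0) / (t - 0) - 0) < r" if "t \<noteq> 0 \<and> norm (t - 0) < \<delta>" for t
    proof -
      have "\<bar>sf t\<bar> \<le> \<epsilon> * \<bar>t\<bar>" using dl that by auto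
      then have "\<bar>sf t\<bar> / \<bar>t\<bar> \<le> \<epsilon>" using that by (simp add: divide_le_eq)
      then show ?thesis using e sf0 by (simp add: abs_divide)
    qed
    then show "\<exists>s>0. \<forall>t. t \<noteq> 0 \<and> norm (t - 0) < s \<longrightarrow> norm ((sf t - sf 0) / (t - 0) - 0) < r"
      using dl by blast
  qed
  have "((\<lambda>t. (1 + sf t) *\<^sub>R c t) has_vector_derivative ((1 + sf 0) *\<^sub>R w + 0 *\<^sub>R c 0)) (at 0)"
    unfolding c_def
    by (rule has_vector_derivative_scaleR)
      (auto intro!: derivative_eq_intros sfd)
  then have "(\<gamma> has_vector_derivative w) (at 0)" unfolding \<gamma>_def sf0 by simp
  then show ?thesis unfolding tangent_space_def using g0 ev by blast
qed

end


context sset begin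

definition grad :: "'a \<Rightarrow> 'a" where "grad y = (\<Sum>b\<in>Basis. D [b] y *\<^sub>R b)"
definition Rt :: "'a \<Rightarrow> 'a" where "Rt y = inverse (D [y] y) *\<^sub>R Psi (grad y)"

lemma grad_inner: "v \<bullet> grad y = D [v] y"
  unfolding grad_def by (simp add: inner_sum_right D_expand[of v y] mult.commute)

lemma omega_Rt: "\<omega> v (Rt y) = D [v] y / D [y] y"
  unfolding Rt_def bilinear_rmul[OF bil] Psi grad_inner by (simp add: divide_inverse mult.commute)

lemma reeb_char:
  assumes lin: "linear (\<phi> :: 'a \<Rightarrow> real)" and p: "\<phi> p \<noteq> 0" and sub: "{v. \<phi> v = 0} \<subseteq> tangent_space S p"
    and r: "\<forall>v\<in>tangent_space S p. \<omega> v r = 0" "\<omega> p r = 1"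
  shows "reeb \<omega> S p = r"
proof -
  have key: "\<omega> v r' = \<phi> v / \<phi> p" if r': "\<forall>v\<in>tangent_space S p. \<omega> v r' = 0" "\<omega> p r' = 1" for r' v
  proof -
    define k where "k = \<phi> v / \<phi> p"
    have "\<phi> (v - k *\<^sub>R p) = 0" using p unfolding k_def linear_diff[OF lin] linear_scale[OF lin] by simp
    then have "v - k *\<^sub>R p \<in> tangent_space S p" using sub by blast
    then have "\<omega> (v - k *\<^sub>R p) r' = 0" using r' by blast
    then have "\<omega> v r' = k * \<omega> p r'" by (simp add: bilinear_lsub[OF bil] bilinear_lmul[OF bil])
    then show ?thesis using r' k_def by simp
  qed
  show ?thesis unfolding reeb_def
  proof (rule the_equality)
    show "(\<forall>v\<in>tangent_space S p. \<omega> v r = 0) \<and> \<omega> p r = 1" using r by blast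
    fix r' assume r': "(\<forall>v\<in>tangent_space S p. \<omega> v r' = 0) \<and> \<omega> p r' = 1"
    have "\<omega> v (r' - r) = 0" for v
      using key[of r' v] key[of r v] r r' by (simp add: bilinear_rsub[OF bil])
    then have "r' - r = 0" by (rule nondeg2)
    then show "r' = r" by simp
  qed
qed

lemma reeb_M: assumes x: "x \<in> M" shows "reeb \<omega> M x = Rt x"
proof (rule reeb_char[of "\<lambda>v. D [v] x"])
  show "linear (\<lambda>v. D [v] x)" by (rule linD)
  show "D [x] x \<noteq> 0" using pos[OF x] by simp
  show "{v. D [v] x = 0} \<subseteq> tangent_space M x" using tan_sup[OF x] by blast
  show "\<forall>v\<in>tangent_space M x. \<omega> v (Rt x) = 0" using tan_sub[OF x] omega_Rt by simp
  show "\<omega> x (Rt x) = 1" using pos[OF x] omega_Rt by simp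
qed

lemma polar_eq: "symplectic_polar \<omega> M = Rt ` M"
  unfolding symplectic_polar_def using reeb_M by (auto simp: image_def)

lemma tanD: assumes x: "x \<in> M" and u: "u \<in> tangent_space (Rt ` M) (Rt x)" shows "\<omega> x u = 0"
proof -
  obtain \<beta> where b: "\<beta> 0 = Rt x" "\<forall>\<^sub>F t in nhds 0. \<beta> t \<in> Rt ` M" "(\<beta> has_vector_derivative u) (at 0)"
    using u unfolding tangent_space_def by blast
  have bd: "(\<beta> has_derivative (\<lambda>t. t *\<^sub>R u)) (at 0)" using b(3) has_vector_derivative_def by blast
  have "((\<lambda>t. \<omega> x (\<beta> t)) has_derivative (\<lambda>t. \<omega> x (t *\<^sub>R u))) (at 0)"
    by (rule bounded_linear.has_derivative[OF _ bd]) (simp add: lin_r linear_conv_bounded_linear[symmetric])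
  moreover have "(\<lambda>t. \<omega> x (t *\<^sub>R u)) = (*) (\<omega> x u)" by (rule ext) (simp add: bilinear_rmul[OF bil])
  ultimately have hd: "((\<lambda>t. \<omega> x (\<beta> t)) has_real_derivative \<omega> x u) (at 0)"
    unfolding has_field_derivative_def by simp
  have le: "\<forall>\<^sub>F t in nhds 0. \<omega> x (\<beta> t) \<le> \<omega> x (\<beta> 0)"
    using b(2)
  proof eventually_elim
    case (elim t)
    then obtain y where y: "y \<in> M" "\<beta> t = Rt y" by blast
    have "D [x] y \<le> D [y] y" using sup_ineq[OF y(1)] x Meq by simp
    then have "D [x] y / D [y] y \<le> 1" using pos[OF y(1)] by simp
    moreover have "\<omega> x (\<beta> 0) = 1" using b(1) omega_Rt pos[OF x] by simp
    ultimately show ?case using y omega_Rt by simp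
  qed
  then obtain d where d: "d > 0" "\<forall>t. dist t 0 < d \<longrightarrow> \<omega> x (\<beta> t) \<le> \<omega> x (\<beta> 0)"
    unfolding eventually_nhds_metric by blast
  show ?thesis
    by (rule DERIV_local_max[OF hd d(1)]) (use d(2) in \<open>auto simp: dist_real_def\<close>)
qed

lemma Rt_deriv:
  assumes x: "x \<in> M"
  shows "\<exists>L. linear L \<and> (Rt has_derivative L) (at x) \<and> (\<forall>w. D [w] x = 0 \<longrightarrow> \<omega> w (L w) = D [w, w] x / D [x] x)"
proof -
  define G' where "G' h = (\<Sum>b\<in>Basis. D [h, b] x *\<^sub>R b)" for h
  define N' where "N' h = (\<Sum>b\<in>Basis. (x \<bullet> b) * D [h, b] x + (h \<bullet> b) * D [b] x)" for h
  have Nx: "D [x] x \<noteq> 0" using pos[OF x] by simp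
  have hG: "(grad has_derivative G') (at x)"
    unfolding grad_def[abs_def] G'_def
    by (intro has_derivative_sum has_derivative_scaleR_left Dd)
  have hPG: "((\<lambda>y. Psi (grad y)) has_derivative (\<lambda>h. Psi (G' h))) (at x)"
    by (rule bounded_linear.has_derivative[OF _ hG]) (simp add: Psi(1) linear_conv_bounded_linear[symmetric])
  have Neq: "(\<lambda>y. D [y] y) = (\<lambda>y. \<Sum>b\<in>Basis. (y \<bullet> b) * D [b] y)" by (rule ext) (rule D_expand)
  have hN: "((\<lambda>y. D [y] y) has_derivative N') (at x)"
    unfolding Neq N'_def
    by (intro has_derivative_sum has_derivative_mult has_derivative_inner_left has_derivative_ident Dd)
  have hI: "((\<lambda>y. inverse (D [y] y)) has_derivative (\<lambda>h. - (inverse (D [x] x) * N' h * inverse (D [x] x)))) (at x)"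
    by (rule Deriv.has_derivative_inverse[OF Nx hN])
  define L where "L h = inverse (D [x] x) *\<^sub>R Psi (G' h) + (- (inverse (D [x] x) * N' h * inverse (D [x] x))) *\<^sub>R Psi (grad x)" for h
  have hR: "(Rt has_derivative L) (at x)"
    unfolding Rt_def[abs_def] L_def[abs_def] by (rule has_derivative_scaleR[OF hI hPG])
  have "\<omega> w (L w) = D [w, w] x / D [x] x" if w: "D [w] x = 0" for w
  proof -
    have "w \<bullet> G' w = D [w, w] x"
      unfolding G'_def by (simp add: inner_sum_right D2_expand[of w w x] mult.commute)
    then show ?thesis unfolding L_def bilinear_radd[OF bil] bilinear_rmul[OF bil] Psi grad_inner w
      by (simp add: divide_inverse mult.commute)
  qed
  then show ?thesis using hR has_derivative_linear[OF hR] by blast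
qed

lemma tanE: assumes x: "x \<in> M" shows "{u. \<omega> x u = 0} \<subseteq> tangent_space (Rt ` M) (Rt x)"
proof -
  obtain L where L: "linear L" "(Rt has_derivative L) (at x)" "\<forall>w. D [w] x = 0 \<longrightarrow> \<omega> w (L w) = D [w, w] x / D [x] x"
    using Rt_deriv[OF x] by blast
  define K0 where "K0 = {v. grad x \<bullet> v = 0}"
  have K0D: "v \<in> K0 \<longleftrightarrow> D [v] x = 0" for v unfolding K0_def by (simp add: inner_commute grad_inner)
  have LT: "L w \<in> tangent_space (Rt ` M) (Rt x)" if w: "w \<in> K0" for w
  proof -
    have "w \<in> tangent_space M x" using tan_sup[OF x] w K0D by blast
    then obtain \<gamma> where g: "\<gamma> 0 = x" "\<forall>\<^sub>F t in nhds 0. \<gamma> t \<in> M" "(\<gamma> has_vector_derivative w) (at 0)"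
      unfolding tangent_space_def by blast
    have gd: "(\<gamma> has_derivative (\<lambda>t. t *\<^sub>R w)) (at 0)" using g(3) has_vector_derivative_def by blast
    have "(Rt \<circ> \<gamma> has_derivative L \<circ> (\<lambda>t. t *\<^sub>R w)) (at 0)"
      by (rule diff_chain_at[OF gd]) (use L(2) g(1) in simp)
    moreover have "L \<circ> (\<lambda>t. t *\<^sub>R w) = (\<lambda>t. t *\<^sub>R L w)" by (rule ext) (simp add: linear_scale[OF L(1)])
    ultimately have "(Rt \<circ> \<gamma> has_vector_derivative L w) (at 0)" unfolding has_vector_derivative_def by simp
    moreover have "(Rt \<circ> \<gamma>) 0 = Rt x" using g(1) by simp
    moreover have "\<forall>\<^sub>F t in nhds 0. (Rt \<circ> \<gamma>) t \<in> Rt ` M" using g(2) by eventually_elim simp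
    ultimately show ?thesis unfolding tangent_space_def mem_Collect_eq
      by (intro exI[of _ "Rt \<circ> \<gamma>"] conjI)
  qed
  define c where "c = (\<Sum>b\<in>Basis. \<omega> x b *\<^sub>R b)"
  define H where "H = {u. c \<bullet> u = 0}"
  have Hc: "c \<bullet> u = \<omega> x u" for u
  proof -
    have "c \<bullet> u = (\<Sum>b\<in>Basis. \<omega> x b * (b \<bullet> u))" unfolding c_def by (simp add: inner_sum_left)
    also have "\<dots> = \<omega> x u" by (subst (2) expand_r) (auto intro!: sum.cong simp: inner_commute)
    finally show ?thesis .
  qed
  have H_eq: "H = {u. \<omega> x u = 0}" unfolding H_def Hc by simp
  have gx: "grad x \<noteq> 0" using pos[OF x] grad_inner[of x x] by (auto simp: inner_commute)
  have cx: "c \<noteq> 0" using Hc[of "Rt x"] omega_Rt[of x x] pos[OF x] by auto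
  have sK: "subspace K0" unfolding K0_def by (rule subspace_hyperplane)
  have sH: "subspace H" unfolding H_def by (rule subspace_hyperplane)
  have LK_H: "L ` K0 \<subseteq> H" unfolding H_eq
  proof (rule image_subsetI)
    fix w assume "w \<in> K0"
    then show "L w \<in> {u. \<omega> x u = 0}" using LT tanD[OF x] by simp
  qed
  have inj: "inj_on L (span K0)"
    unfolding span_eq_iff[THEN iffD2, OF sK]
  proof (rule inj_onI)
    fix a b assume a: "a \<in> K0" and b: "b \<in> K0" and eq: "L a = L b"
    define d where "d = a - b"
    have dK: "D [d] x = 0" using a b K0D unfolding d_def by (simp add: Dlin_diff)
    have Ld: "L d = 0" using eq unfolding d_def linear_diff[OF L(1)] by simp
    show "a = b"
    proof (rule ccontr)
      assume "a \<noteq> b"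
      then have "d \<noteq> 0" unfolding d_def by simp
      then have "D [d, d] x > 0" using qc x dK by blast
      then have "\<omega> d (L d) > 0" using L(3) dK pos[OF x] by simp
      then show False using Ld bilinear_rzero[OF bil] by simp
    qed
  qed
  have "dim (L ` K0) = dim K0" by (rule dim_image_eq[OF L(1) inj])
  also have "\<dots> = DIM('a) - 1" unfolding K0_def by (rule dim_hyperplane[OF gx])
  also have "\<dots> = dim H" unfolding H_def by (rule dim_hyperplane[OF cx, symmetric])
  finally have "L ` K0 = H"
    by (intro subspace_dim_equal linear_subspace_image[OF L(1) sK] sH LK_H) simp
  show ?thesis
  proof
    fix u assume "u \<in> {u. \<omega> x u = 0}"
    then have "u \<in> L ` K0" using \<open>L ` K0 = H\<close> H_eq by simp
    then obtain w where "w \<in> K0" "u = L w" by blast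
    then show "u \<in> tangent_space (Rt ` M) (Rt x)" using LT by simp
  qed
qed

lemma reeb_star: assumes x: "x \<in> M" shows "reeb \<omega> (Rt ` M) (Rt x) = - x"
proof (rule reeb_char[of "\<omega> x"])
  show "linear (\<omega> x)" by (rule lin_r)
  have o1: "\<omega> x (Rt x) = 1" using pos[OF x] omega_Rt by simp
  then show "\<omega> x (Rt x) \<noteq> 0" by simp
  show "{v. \<omega> x v = 0} \<subseteq> tangent_space (Rt ` M) (Rt x)" by (rule tanE[OF x])
  show "\<forall>v\<in>tangent_space (Rt ` M) (Rt x). \<omega> v (- x) = 0"
    using tanD[OF x] by (metis asym bilinear_rneg[OF bil] neg_equal_0_iff_equal)
  show "\<omega> (Rt x) (- x) = 1" using o1 by (metis asym bilinear_rneg[OF bil] minus_minus)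
qed

end

theorem lemma2p5:
  fixes \<omega> :: "'a::euclidean_space \<Rightarrow> 'a \<Rightarrow> real" and M :: "'a set"
  assumes "symplectic_form \<omega>" and "qconvex_hypersurface M"
  shows "(\<forall>x\<in>M. reeb \<omega> (symplectic_polar \<omega> M) (reeb \<omega> M x) = - x)
    \<and> symplectic_polar \<omega> (symplectic_polar \<omega> M) = uminus ` M"
proof -
  obtain \<rho> D where h: "smooth_derivs \<rho> D" "M = {x. \<rho> x = 0}"
    "\<forall>x\<in>M. \<exists>v. D [v] x \<noteq> 0"
    "\<forall>x\<in>M. \<forall>v. v \<noteq> 0 \<and> D [v] x = 0 \<longrightarrow> D [v, v] x > 0"
    "convex {x. \<rho> x \<le> 0}" "0 \<in> interior {x. \<rho> x \<le> 0}"
    using assms(2) unfolding qconvex_hypersurface_def by blast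
  interpret sset \<omega> \<rho> D M
    by unfold_locales (use assms(1) h in auto)
  have P: "symplectic_polar \<omega> M = Rt ` M" by (rule polar_eq)
  show ?thesis
  proof
    show "\<forall>x\<in>M. reeb \<omega> (symplectic_polar \<omega> M) (reeb \<omega> M x) = - x"
      using reeb_M reeb_star P by simp
    have "symplectic_polar \<omega> (symplectic_polar \<omega> M) = (\<lambda>x. reeb \<omega> (Rt ` M) (Rt x)) ` M"
      unfolding P by (simp add: symplectic_polar_def image_image)
    also have "\<dots> = uminus ` M" using reeb_star by (auto intro: image_cong)
    finally show "symplectic_polar \<omega> (symplectic_polar \<omega> M) = uminus ` M" .
  qed
qed

end
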